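(* Let $d\ge2$ and let $N$ be a nonnegative integer random variable with $E[N]<\infty$. Then for the anisotropic percolation with random range with range distribution $N$, $q_c(p)>0$ for every $p\in[0,1)$; that is, for every $p<1$ there exists $q>0$ with $\theta(p,q)=0$.
   Context: Anisotropic percolation with random range (APRR). Let $d\ge2$, let $(\vec e_i)_{i=1}^d$ be the canonical basis of $\mathbb{Z}^d$, $o$ the origin. Let $\mathbb{E}_h=\bigcup_{n\ge1}\{(x,y)\in\mathbb{Z}^d\times\mathbb{Z}^d: y-x=n\vec e_1\}$ and $\mathbb{E}_v=\{(x,y): y-x=\vec e_i,\ i\in\{2,\dots,d\}\}$ (oriented bonds). Given i.i.d. random variables $\mathbf N=(N_x)_{x\in\mathbb{Z}^d}$ with common law $N$ (nonnegative integer valued), let $G_{\mathbf N}$ be the oriented graph with vertex set $\mathbb{Z}^d$ and bond set $\mathbb{E}_v\cup\bigcup_{x}\{(x,x+n\vec e_1): 1\le n\le N_x\}$. Given $p,q\in[0,1]$, each bond of $G_{\mathbf N}$ in $\mathbb{E}_h$ is open with probability $p$ and each bond in $\mathbb{E}_v$ is open with probability $q$, independently of each other (conditionally on $\mathbf N$). $(x\to y)$ denotes the existence of an oriented path of open bonds from $x$ to $y$, and $(x\to\infty)$ the event that $x$ is connected by oriented open paths to infinitely many vertices. Let $P$ be the joint law, $\theta(p,q)=P(o\to\infty)$ and $q_c(p)=\sup\{q:\theta(p,q)=0\}$. *)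

theory Defs
  imports "HOL-Probability.Probability"
begin

text \<open>Vertices of Z^d: functions nat => int vanishing at coordinates >= d.
  Coordinate 0 plays the role of the direction e_1; coordinates 1..d-1 are e_2..e_d.\<close>

definition vertices :: "nat \<Rightarrow> (nat \<Rightarrow> int) set" where
  "vertices d = {x. \<forall>j\<ge>d. x j = 0}"

definition origin :: "nat \<Rightarrow> int" where
  "origin = (\<lambda>_. 0)"

definition shift :: "(nat \<Rightarrow> int) \<Rightarrow> nat \<Rightarrow> int \<Rightarrow> (nat \<Rightarrow> int)" where
  "shift x i n = (\<lambda>j. if j = i then x j + n else x j)"

text \<open>Random variables of the model: the range N_x at each site, the state of each
  potential horizontal bond (x, x + n e_1), n >= 1, and the state of each vertical bond
  (x, x + e_i), 1 <= i < d.  Horizontal bond (x, x + n e_1) belongs to G_N iff n <= N_x;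
  drawing the states of all potential horizontal bonds independently and keeping only those
  of G_N realises the conditional independence given N.\<close>

datatype idx = Range "nat \<Rightarrow> int" | Hbond "nat \<Rightarrow> int" nat | Vbond "nat \<Rightarrow> int" nat

definition index_set :: "nat \<Rightarrow> idx set" where
  "index_set d = {Range x | x. x \<in> vertices d}
     \<union> {Hbond x n | x n. x \<in> vertices d \<and> 1 \<le> n}
     \<union> {Vbond x i | x i. x \<in> vertices d \<and> 1 \<le> i \<and> i < d}"

definition bond_pmf :: "real \<Rightarrow> nat pmf" where
  "bond_pmf r = map_pmf (\<lambda>b. if b then 1 else 0) (bernoulli_pmf r)"

definition coord_pmf :: "nat pmf \<Rightarrow> real \<Rightarrow> real \<Rightarrow> idx \<Rightarrow> nat pmf" where
  "coord_pmf N p q i = (case i of Range _ \<Rightarrow> N | Hbond _ _ \<Rightarrow> bond_pmf p | Vbond _ _ \<Rightarrow> bond_pmf q)"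

definition APRR :: "nat \<Rightarrow> nat pmf \<Rightarrow> real \<Rightarrow> real \<Rightarrow> (idx \<Rightarrow> nat) measure" where
  "APRR d N p q = PiM (index_set d) (\<lambda>i. measure_pmf (coord_pmf N p q i))"

definition open_bond :: "nat \<Rightarrow> (idx \<Rightarrow> nat) \<Rightarrow> (nat \<Rightarrow> int) \<Rightarrow> (nat \<Rightarrow> int) \<Rightarrow> bool" where
  "open_bond d w x y \<longleftrightarrow> x \<in> vertices d \<and>
     ((\<exists>n. 1 \<le> n \<and> n \<le> w (Range x) \<and> w (Hbond x n) = 1 \<and> y = shift x 0 (int n)) \<or>
      (\<exists>i. 1 \<le> i \<and> i < d \<and> w (Vbond x i) = 1 \<and> y = shift x i 1))"

definition perc_event :: "nat \<Rightarrow> (idx \<Rightarrow> nat) set" where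
  "perc_event d = {w. infinite {y. (open_bond d w)\<^sup>*\<^sup>* origin y}}"

definition theta :: "nat \<Rightarrow> nat pmf \<Rightarrow> real \<Rightarrow> real \<Rightarrow> real" where
  "theta d N p q = measure (APRR d N p q) (perc_event d \<inter> space (APRR d N p q))"

end

theory Submission
  imports Defs
begin


lemma (in product_prob_space) indep_nn:
  assumes C: "C1 \<subseteq> I" "C2 \<subseteq> I" "C1 \<inter> C2 = {}" "C1 \<noteq> {}"
  and f[measurable]: "f \<in> borel_measurable (PiM I M)"
  and g[measurable]: "g \<in> borel_measurable (PiM I M)"
  and fd: "\<And>w w'. w \<in> space (PiM I M) \<Longrightarrow> w' \<in> space (PiM I M) \<Longrightarrow> (\<forall>i\<in>C1. w i = w' i) \<Longrightarrow> f w = f w'"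
  and gd: "\<And>w w'. w \<in> space (PiM I M) \<Longrightarrow> w' \<in> space (PiM I M) \<Longrightarrow> (\<forall>i\<in>C2. w i = w' i) \<Longrightarrow> g w = g w'"
  shows "(\<integral>\<^sup>+w. f w * g w \<partial>PiM I M) = (\<integral>\<^sup>+w. f w \<partial>PiM I M) * (\<integral>\<^sup>+w. g w \<partial>PiM I M)"
proof -
  let ?O = "PiM I M"
  obtain w0 where w0: "w0 \<in> space ?O"
    using P.not_empty by blast
  define ext where "ext C u = (\<lambda>i. if i \<in> C then u i else w0 i)" for C :: "'i set" and u :: "'i \<Rightarrow> 'a"
  have ext_sp: "ext C u \<in> space ?O" if "C \<subseteq> I" "u \<in> space (PiM C M)" for C u
    using that w0 unfolding ext_def space_PiM by (auto simp: PiE_def Pi_def extensional_def)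
  have ext_meas: "ext C \<in> measurable (PiM C M) ?O" if "C \<subseteq> I" for C
    unfolding ext_def
  proof (rule measurable_PiM_single')
    fix i assume "i \<in> I"
    show "(\<lambda>u. if i \<in> C then u i else w0 i) \<in> measurable (PiM C M) (M i)"
    proof (cases "i \<in> C")
      case True then show ?thesis by simp
    next
      case False then show ?thesis using w0 \<open>i\<in>I\<close> by (simp add: space_PiM PiE_iff)
    qed
  next
    show "(\<lambda>u i. if i \<in> C then u i else w0 i) \<in> space (PiM C M) \<rightarrow> (\<Pi>\<^sub>E i\<in>I. space (M i))"
      using ext_sp[OF that] unfolding ext_def space_PiM by auto
  qed
  have fe: "f w = f (ext C1 (restrict w C1))" if "w \<in> space ?O" for w
    by (rule fd[OF that ext_sp]) (use C that in \<open>auto simp: ext_def space_PiM\<close>)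
  have ge: "g w = g (ext C2 (restrict w C2))" if "w \<in> space ?O" for w
    by (rule gd[OF that ext_sp]) (use C that in \<open>auto simp: ext_def space_PiM\<close>)
  define X where "X = (\<lambda>w::'i\<Rightarrow>'a. restrict w C1)"
  define Y where "Y = (\<lambda>w::'i\<Rightarrow>'a. restrict w C2)"
  define F where "F = (\<lambda>u. f (ext C1 u))"
  define G where "G = (\<lambda>u. g (ext C2 u))"
  have Fm[measurable]: "F \<in> borel_measurable (PiM C1 M)"
    unfolding F_def using ext_meas[OF C(1)] by measurable
  have Gm[measurable]: "G \<in> borel_measurable (PiM C2 M)"
    unfolding G_def using ext_meas[OF C(2)] by measurable
  have iv: "indep_vars M (\<lambda>i w. w i) I"
  proof -
    have False: "I \<noteq> {}" using C by auto
    show ?thesis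
    proof (subst indep_vars_iff_distr_eq_PiM')
      show "distr ?O ?O (\<lambda>x. \<lambda>i\<in>I. x i) = (\<Pi>\<^sub>M i\<in>I. distr ?O (M i) (\<lambda>w. w i))"
      proof -
        have "distr ?O ?O (\<lambda>x. \<lambda>i\<in>I. x i) = distr ?O ?O (\<lambda>x. x)"
          by (rule distr_cong) (auto simp: space_PiM PiE_def extensional_restrict)
        also have "\<dots> = ?O" by simp
        also have "\<dots> = (\<Pi>\<^sub>M i\<in>I. distr ?O (M i) (\<lambda>w. w i))"
          by (rule PiM_cong) (auto simp: PiM_component)
        finally show ?thesis .
      qed
    qed (use False in auto)
  qed
  have ind: "indep_var (PiM C1 M) X (PiM C2 M) Y"
    using indep_var_restrict[OF iv C(3) C(1) C(2)] unfolding X_def Y_def by simp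
  have Xm[measurable]: "X \<in> measurable ?O (PiM C1 M)" unfolding X_def using C
    by (intro measurable_restrict_subset) auto
  have Ym[measurable]: "Y \<in> measurable ?O (PiM C2 M)" unfolding Y_def using C
    by (intro measurable_restrict_subset) auto
  interpret D1: prob_space "distr ?O (PiM C1 M) X" by (rule prob_space_distr) simp
  interpret D2: prob_space "distr ?O (PiM C2 M) Y" by (rule prob_space_distr) simp
  interpret D12: pair_sigma_finite "distr ?O (PiM C1 M) X" "distr ?O (PiM C2 M) Y" ..
  have eq: "distr ?O (PiM C1 M) X \<Otimes>\<^sub>M distr ?O (PiM C2 M) Y = distr ?O (PiM C1 M \<Otimes>\<^sub>M PiM C2 M) (\<lambda>x. (X x, Y x))"
    using ind by (simp add: indep_var_distribution_eq)
  have "(\<integral>\<^sup>+w. f w * g w \<partial>?O) = (\<integral>\<^sup>+w. F (X w) * G (Y w) \<partial>?O)"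
    by (rule nn_integral_cong) (simp add: F_def G_def X_def Y_def fe[symmetric] ge[symmetric])
  also have "\<dots> = (\<integral>\<^sup>+z. F (fst z) * G (snd z) \<partial>distr ?O (PiM C1 M \<Otimes>\<^sub>M PiM C2 M) (\<lambda>x. (X x, Y x)))"
    by (subst nn_integral_distr) auto
  also have "\<dots> = (\<integral>\<^sup>+z. F (fst z) * G (snd z) \<partial>(distr ?O (PiM C1 M) X \<Otimes>\<^sub>M distr ?O (PiM C2 M) Y))"
    by (simp add: eq)
  also have "\<dots> = (\<integral>\<^sup>+x. \<integral>\<^sup>+y. F x * G y \<partial>distr ?O (PiM C2 M) Y \<partial>distr ?O (PiM C1 M) X)"
    by (subst D2.nn_integral_fst[symmetric]) auto
  also have "\<dots> = (\<integral>\<^sup>+x. F x * (\<integral>\<^sup>+y. G y \<partial>distr ?O (PiM C2 M) Y) \<partial>distr ?O (PiM C1 M) X)"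
    by (rule nn_integral_cong) (simp add: nn_integral_cmult)
  also have "\<dots> = (\<integral>\<^sup>+x. F x \<partial>distr ?O (PiM C1 M) X) * (\<integral>\<^sup>+y. G y \<partial>distr ?O (PiM C2 M) Y)"
    by (simp add: nn_integral_multc)
  also have "\<dots> = (\<integral>\<^sup>+w. F (X w) \<partial>?O) * (\<integral>\<^sup>+w. G (Y w) \<partial>?O)"
    by (simp add: nn_integral_distr)
  also have "\<dots> = (\<integral>\<^sup>+w. f w \<partial>?O) * (\<integral>\<^sup>+w. g w \<partial>?O)"
    by (intro arg_cong2[where f="(*)"] nn_integral_cong) (simp_all add: F_def G_def X_def Y_def fe[symmetric] ge[symmetric])
  finally show ?thesis .
qed



definition pt :: "(nat \<Rightarrow> int) \<Rightarrow> nat \<Rightarrow> (nat \<Rightarrow> int)" where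
  "pt a i = shift a 0 (int i)"

definition Jmp :: "(idx \<Rightarrow> nat) \<Rightarrow> (nat \<Rightarrow> int) \<Rightarrow> nat \<Rightarrow> bool" where
  "Jmp w z m \<longleftrightarrow> (\<exists>n. m < n \<and> n \<le> w (Range z) \<and> w (Hbond z n) = 1)"

definition Fev :: "(idx \<Rightarrow> nat) \<Rightarrow> (nat \<Rightarrow> int) \<Rightarrow> nat \<Rightarrow> bool" where
  "Fev w a t \<longleftrightarrow> (\<forall>j<t. \<exists>i\<le>j. Jmp w (pt a i) (j - i))"

definition zz :: "(nat \<Rightarrow> int) \<Rightarrow> nat \<Rightarrow> nat \<Rightarrow> (nat \<Rightarrow> int)" where
  "zz a t i = shift (pt a t) i 1"

fun Eset :: "nat \<Rightarrow> (idx \<Rightarrow> nat) \<Rightarrow> (nat \<Rightarrow> int) \<Rightarrow> nat \<Rightarrow> (nat \<Rightarrow> int) set" where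
  "Eset d w x 0 = (\<Union>tf. if Fev w x tf then {pt x tf} else {})"
| "Eset d w x (Suc k) = (\<Union>t. \<Union>i\<in>{1..<d}. if Fev w x t \<and> w (Vbond (pt x t) i) = 1 then Eset d w (zz x t i) k else {})"

fun Cnt :: "nat \<Rightarrow> (idx \<Rightarrow> nat) \<Rightarrow> (nat \<Rightarrow> int) \<Rightarrow> nat \<Rightarrow> ennreal" where
  "Cnt d w x 0 = (\<Sum>tf. if Fev w x tf then 1 else 0)"
| "Cnt d w x (Suc k) = (\<Sum>t. \<Sum>i\<in>{1..<d}. (if Fev w x t \<and> w (Vbond (pt x t) i) = 1 then 1 else 0) * Cnt d w (zz x t i) k)"

lemma pt_0[simp]: "pt x 0 = x"
  by (simp add: pt_def shift_def fun_eq_iff)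

lemma pt_pt[simp]: "pt (pt x n) t = pt x (n + t)"
  by (auto simp: pt_def shift_def fun_eq_iff)

lemma Fev_0[simp]: "Fev w x 0"
  by (simp add: Fev_def)

lemma Fev_shift:
  assumes "1 \<le> n" "n \<le> w (Range x)" "w (Hbond x n) = 1" "Fev w (pt x n) t"
  shows "Fev w x (n + t)"
  unfolding Fev_def
proof (intro allI impI)
  fix j assume j: "j < n + t"
  show "\<exists>i\<le>j. Jmp w (pt x i) (j - i)"
  proof (cases "j < n")
    case True
    then show ?thesis using assms by (intro exI[of _ 0]) (auto simp: Jmp_def)
  next
    case False
    then have "j - n < t" using j by auto
    with assms(4) obtain i where "i \<le> j - n" "Jmp w (pt (pt x n) i) (j - n - i)"
      unfolding Fev_def by blast
    then show ?thesis using False by (intro exI[of _ "n + i"]) auto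
  qed
qed

lemma Eset_shift:
  assumes "1 \<le> n" "n \<le> w (Range x)" "w (Hbond x n) = 1"
  shows "Eset d w (pt x n) k \<subseteq> Eset d w x k"
proof (cases k)
  case 0
  show ?thesis
  proof
    fix y assume "y \<in> Eset d w (pt x n) k"
    then obtain tf where "Fev w (pt x n) tf" "y = pt x (n + tf)" using 0 by (auto split: if_splits)
    then show "y \<in> Eset d w x k" using 0 Fev_shift[OF assms] by (auto intro!: exI[of _ "n+tf"])
  qed
next
  case (Suc k')
  show ?thesis
  proof
    fix y assume "y \<in> Eset d w (pt x n) k"
    then obtain t i where "i \<in> {1..<d}" "Fev w (pt x n) t" "w (Vbond (pt x (n+t)) i) = 1"
        "y \<in> Eset d w (zz (pt x n) t i) k'" using Suc by (auto split: if_splits)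
    moreover have "zz (pt x n) t i = zz x (n+t) i" by (simp add: zz_def)
    ultimately show "y \<in> Eset d w x k" using Suc Fev_shift[OF assms]
      by (auto intro!: exI[of _ "n+t"] bexI[of _ i])
  qed
qed

lemma reach_Eset:
  assumes "(open_bond d w)\<^sup>*\<^sup>* x y"
  shows "\<exists>k. y \<in> Eset d w x k"
  using assms
proof (induction rule: converse_rtranclp_induct)
  case base
  then show ?case by (intro exI[of _ 0]) (auto intro!: exI[of _ 0])
next
  case (step x z)
  then obtain k where k: "y \<in> Eset d w z k" by blast
  from step(1) consider (h) n where "1 \<le> n" "n \<le> w (Range x)" "w (Hbond x n) = 1" "z = shift x 0 (int n)"
    | (v) i where "1 \<le> i" "i < d" "w (Vbond x i) = 1" "z = shift x i 1"
    unfolding open_bond_def by blast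
  then show ?case
  proof cases
    case h
    then have "z = pt x n" by (simp add: pt_def)
    then show ?thesis using Eset_shift[OF h(1-3)] k by blast
  next
    case v
    then have "z = zz x 0 i" by (simp add: zz_def)
    then show ?thesis using v k by (intro exI[of _ "Suc k"]) (auto intro!: exI[of _ 0] bexI[of _ i])
  qed
qed

lemma Eset_card:
  "emeasure (count_space UNIV) (Eset d w x k) \<le> Cnt d w x k"
proof (induction k arbitrary: x)
  case 0
  have "emeasure (count_space UNIV) (Eset d w x 0)
      \<le> (\<Sum>tf. emeasure (count_space UNIV) (if Fev w x tf then {pt x tf} else {}))"
    by (simp only: Eset.simps, rule emeasure_subadditive_countably, auto)
  also have "\<dots> = Cnt d w x 0"
    unfolding Cnt.simps by (intro arg_cong[where f=suminf] ext) (simp add: emeasure_count_space_finite)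
  finally show ?case .
next
  case (Suc k)
  let ?A = "\<lambda>t i. if Fev w x t \<and> w (Vbond (pt x t) i) = 1 then Eset d w (zz x t i) k else {}"
  have "emeasure (count_space UNIV) (Eset d w x (Suc k))
      \<le> (\<Sum>t. emeasure (count_space UNIV) (\<Union>i\<in>{1..<d}. ?A t i))"
    by (simp only: Eset.simps, rule emeasure_subadditive_countably, auto)
  also have "\<dots> \<le> (\<Sum>t. \<Sum>i\<in>{1..<d}. emeasure (count_space UNIV) (?A t i))"
    by (intro suminf_le summableI emeasure_subadditive_finite) auto
  also have "\<dots> \<le> Cnt d w x (Suc k)"
    unfolding Cnt.simps
    by (intro suminf_le summableI sum_mono) (use Suc in \<open>auto\<close>)
  finally show ?case .
qed



abbreviation MM :: "nat pmf \<Rightarrow> real \<Rightarrow> real \<Rightarrow> idx \<Rightarrow> nat measure" where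
  "MM N p q \<equiv> (\<lambda>i. measure_pmf (coord_pmf N p q i))"

lemma APRR_eq: "APRR d N p q = PiM (index_set d) (MM N p q)"
  by (simp add: APRR_def)

lemma PPS: "product_prob_space (MM N p q)"
  by (simp add: product_prob_space_def product_prob_space_axioms_def product_sigma_finite_def
      prob_space_measure_pmf prob_space_imp_sigma_finite)

lemma space_APRR: "space (APRR d N p q) = (\<Pi>\<^sub>E i\<in>index_set d. UNIV)"
  by (simp add: APRR_eq space_PiM)

lemma coord_meas[measurable]: "(\<lambda>w. w i) \<in> measurable (APRR d N p q) (count_space UNIV)"
proof (cases "i \<in> index_set d")
  case True
  have "(\<lambda>w. w i) \<in> measurable (APRR d N p q) (MM N p q i)"
    unfolding APRR_eq using True by (rule measurable_component_singleton)
  moreover have "measurable (APRR d N p q) (MM N p q i) = measurable (APRR d N p q) (count_space UNIV)"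
    by (rule measurable_cong_sets) auto
  ultimately show ?thesis by simp
next
  case False
  have "(\<lambda>w. undefined) \<in> measurable (APRR d N p q) (count_space UNIV)" by simp
  then show ?thesis
    by (rule measurable_cong[THEN iffD1, rotated]) (use False in \<open>auto simp: space_APRR PiE_def extensional_def\<close>)
qed

lemma Jmp_meas[measurable]: "Measurable.pred (APRR d N p q) (\<lambda>w. Jmp w z m)"
  unfolding Jmp_def by measurable

lemma Fev_meas[measurable]: "Measurable.pred (APRR d N p q) (\<lambda>w. Fev w a t)"
  unfolding Fev_def by measurable

lemma Cnt_meas[measurable]: "(\<lambda>w. Cnt d w x k) \<in> borel_measurable (APRR d' N p q)"
proof (induction k arbitrary: x)
  case 0
  then show ?case by simp
next
  case (Suc k)
  then show ?case by simp
qed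



definition hgt :: "nat \<Rightarrow> (nat \<Rightarrow> int) \<Rightarrow> int" where
  "hgt d v = (\<Sum>j\<in>{1..<d}. v j)"

fun vtx :: "idx \<Rightarrow> nat \<Rightarrow> int" where
  "vtx (Range x) = x" | "vtx (Hbond x n) = x" | "vtx (Vbond x i) = x"

lemma shift_vert: "x \<in> vertices d \<Longrightarrow> i < d \<Longrightarrow> shift x i n \<in> vertices d"
  by (auto simp: vertices_def shift_def)

lemma pt_vert: "x \<in> vertices d \<Longrightarrow> 0 < d \<Longrightarrow> pt x t \<in> vertices d"
  by (simp add: pt_def shift_vert)

lemma zz_vert: "x \<in> vertices d \<Longrightarrow> i < d \<Longrightarrow> zz x t i \<in> vertices d"
  by (simp add: zz_def shift_vert pt_vert)

lemma hgt_pt[simp]: "hgt d (pt x t) = hgt d x"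
  unfolding hgt_def pt_def shift_def by (intro sum.cong) auto

lemma hgt_zz: assumes "1 \<le> i" "i < d" shows "hgt d (zz x t i) = hgt d x + 1"
proof -
  have "hgt d (zz x t i) = (\<Sum>j\<in>{1..<d}. pt x t j + (if j = i then 1 else 0))"
    unfolding hgt_def zz_def shift_def by (intro sum.cong) auto
  also have "\<dots> = hgt d (pt x t) + 1"
    using assms by (simp add: sum.distrib hgt_def)
  finally show ?thesis by simp
qed

lemma Fev_dep:
  assumes "\<And>j. w (Range (pt x j)) = w' (Range (pt x j))" "\<And>j n. w (Hbond (pt x j) n) = w' (Hbond (pt x j) n)"
  shows "Fev w x t = Fev w' x t"
  unfolding Fev_def Jmp_def using assms by simp

lemma Cnt_dep:
  "(\<And>i. hgt d (vtx i) \<ge> hgt d x \<Longrightarrow> w i = w' i) \<Longrightarrow> Cnt d w x k = Cnt d w' x k"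
proof (induction k arbitrary: x)
  case 0
  have "Fev w x tf = Fev w' x tf" for tf
    by (rule Fev_dep) (auto intro!: 0)
  then show ?case by simp
next
  case (Suc k)
  have F: "Fev w x tf = Fev w' x tf" for tf
    by (rule Fev_dep) (auto intro!: Suc.prems)
  have V: "w (Vbond (pt x t) i) = w' (Vbond (pt x t) i)" for t i
    by (auto intro!: Suc.prems)
  have C: "Cnt d w (zz x t i) k = Cnt d w' (zz x t i) k" if "i \<in> {1..<d}" for t i
    by (rule Suc.IH) (use that hgt_zz[of i d x t] in \<open>auto intro!: Suc.prems\<close>)
  show ?case
    unfolding Cnt.simps F V
    by (intro arg_cong[where f=suminf] ext sum.cong refl) (simp add: C)
qed



definition vadd :: "(nat \<Rightarrow> int) \<Rightarrow> (nat \<Rightarrow> int) \<Rightarrow> (nat \<Rightarrow> int)" where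
  "vadd a x = (\<lambda>j. x j + a j)"

fun tr :: "(nat \<Rightarrow> int) \<Rightarrow> idx \<Rightarrow> idx" where
  "tr a (Range x) = Range (vadd a x)"
| "tr a (Hbond x n) = Hbond (vadd a x) n"
| "tr a (Vbond x i) = Vbond (vadd a x) i"

lemma vadd_vert: "a \<in> vertices d \<Longrightarrow> x \<in> vertices d \<Longrightarrow> vadd a x \<in> vertices d"
  by (auto simp: vertices_def vadd_def)

lemma inj_vadd: "inj (vadd a)"
  by (auto simp: inj_def vadd_def fun_eq_iff)

lemma tr_I: "a \<in> vertices d \<Longrightarrow> i \<in> index_set d \<Longrightarrow> tr a i \<in> index_set d"
  by (auto simp: index_set_def vadd_vert)

lemma inj_tr: "inj (tr a)"
proof (rule injI)
  fix i j assume "tr a i = tr a j"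
  then show "i = j" using inj_vadd[of a]
    by (cases i; cases j) (auto simp: inj_def)
qed

lemma coord_tr[simp]: "coord_pmf N p q (tr a i) = coord_pmf N p q i"
  by (cases i) (auto simp: coord_pmf_def)

lemma vadd_pt: "vadd a (pt origin j) = pt a j"
  by (auto simp: vadd_def pt_def shift_def origin_def fun_eq_iff)

lemma origin_vert: "origin \<in> vertices d"
  by (simp add: vertices_def origin_def)

lemma Fev_transl:
  assumes "\<And>j. u (Range (pt b j)) = w (Range (pt a j))" "\<And>j n. 1 \<le> n \<Longrightarrow> u (Hbond (pt b j) n) = w (Hbond (pt a j) n)"
  shows "Fev u b t = Fev w a t"
proof -
  have "Jmp u (pt b i) m = Jmp w (pt a i) m" for i m
  proof -
    have H: "m < n \<Longrightarrow> u (Hbond (pt b i) n) = w (Hbond (pt a i) n)" for n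
      using assms(2)[of n i] by simp
    show ?thesis unfolding Jmp_def assms(1) using H by auto
  qed
  then show ?thesis unfolding Fev_def by simp
qed

lemma transl:
  assumes a: "a \<in> vertices d" and d: "0 < d"
  shows "emeasure (APRR d N p q) {w\<in>space (APRR d N p q). Fev w a t}
       = emeasure (APRR d N p q) {w\<in>space (APRR d N p q). Fev w origin t}"
proof -
  let ?I = "index_set d" and ?M = "MM N p q"
  let ?O = "APRR d N p q"
  define T where "T = (\<lambda>\<omega>. \<lambda>n\<in>?I. \<omega> (tr a n) :: nat)"
  have PiM_eq: "(\<Pi>\<^sub>M i\<in>?I. ?M (tr a i)) = ?O"
    by (simp add: APRR_eq)
  have dist: "distr ?O ?O T = ?O"
    using distr_PiM_reindex[of ?I ?M "tr a" ?I] inj_tr[of a] tr_I[OF a]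
    unfolding T_def PiM_eq by (auto simp: APRR_eq prob_space_measure_pmf inj_on_def inj_def)
  have Tm: "T \<in> measurable ?O ?O"
    unfolding T_def APRR_eq
  proof (rule measurable_restrict)
    fix n assume "n \<in> ?I"
    then have "(\<lambda>\<omega>. \<omega> (tr a n)) \<in> measurable (PiM ?I ?M) (?M (tr a n))"
      using tr_I[OF a] by (intro measurable_component_singleton) auto
    then show "(\<lambda>\<omega>. \<omega> (tr a n)) \<in> measurable (PiM ?I ?M) (?M n)" by simp
  qed
  have inI: "Range (pt origin j) \<in> ?I" "Hbond (pt origin j) n \<in> ?I" if "1 \<le> n" for j n
    using pt_vert[OF origin_vert d] that by (auto simp: index_set_def)
  have eq: "{w\<in>space ?O. Fev w a t} = T -` {w\<in>space ?O. Fev w origin t} \<inter> space ?O"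
  proof -
    have "Fev (T w) origin t = Fev w a t" if "w \<in> space ?O" for w
    proof -
      show ?thesis
        by (rule Fev_transl) (use inI in \<open>auto simp: T_def vadd_pt\<close>)
    qed
    then show ?thesis using measurable_space[OF Tm] by auto
  qed
  have "emeasure ?O {w\<in>space ?O. Fev w a t} = emeasure (distr ?O ?O T) {w\<in>space ?O. Fev w origin t}"
    unfolding eq by (subst emeasure_distr[OF Tm]) auto
  then show ?thesis by (simp add: dist)
qed



lemma indepO:
  assumes C: "C1 \<subseteq> index_set d" "C2 \<subseteq> index_set d" "C1 \<inter> C2 = {}" "C1 \<noteq> {}"
  and f: "f \<in> borel_measurable (APRR d N p q)"
  and g: "g \<in> borel_measurable (APRR d N p q)"
  and fd: "\<And>w w'. w \<in> space (APRR d N p q) \<Longrightarrow> w' \<in> space (APRR d N p q) \<Longrightarrow> (\<forall>i\<in>C1. w i = w' i) \<Longrightarrow> f w = f w'"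
  and gd: "\<And>w w'. w \<in> space (APRR d N p q) \<Longrightarrow> w' \<in> space (APRR d N p q) \<Longrightarrow> (\<forall>i\<in>C2. w i = w' i) \<Longrightarrow> g w = g w'"
  shows "(\<integral>\<^sup>+w. f w * g w \<partial>APRR d N p q) = (\<integral>\<^sup>+w. f w \<partial>APRR d N p q) * (\<integral>\<^sup>+w. g w \<partial>APRR d N p q)"
proof -
  interpret product_prob_space "MM N p q" "index_set d" by (rule PPS)
  show ?thesis using indep_nn[OF C, of f g] f g fd gd unfolding APRR_eq by blast
qed

lemma agree_space:
  assumes "w \<in> space (APRR d N p q)" "w' \<in> space (APRR d N p q)" "\<forall>i\<in>C. w i = w' i" "i \<in> C \<or> i \<notin> index_set d"
  shows "w i = w' i"
  using assms by (auto simp: space_APRR PiE_def extensional_def)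

lemma int_if:
  assumes "Measurable.pred M P"
  shows "(\<integral>\<^sup>+w. (if P w then 1 else 0) \<partial>M) = emeasure M {w\<in>space M. P w}"
proof -
  have "(\<integral>\<^sup>+w. (if P w then 1 else 0) \<partial>M) = (\<integral>\<^sup>+w. indicator {w\<in>space M. P w} w \<partial>M)"
    by (rule nn_integral_cong) (auto simp: indicator_def)
  also have "\<dots> = emeasure M {w\<in>space M. P w}"
    using assms by (intro nn_integral_indicator) auto
  finally show ?thesis .
qed

lemma bond_one: "0 \<le> q \<Longrightarrow> q \<le> 1 \<Longrightarrow> emeasure (measure_pmf (bond_pmf q)) {1} = ennreal q"
proof -
  assume q: "0 \<le> q" "q \<le> 1"
  have "{x. x} = {True}" by auto
  then show ?thesis using q by (simp add: bond_pmf_def emeasure_pmf_single pmf_map measure_pmf_single vimage_def)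
qed

lemma Pvert:
  assumes "z \<in> vertices d" "1 \<le> i" "i < d" "0 \<le> q" "q \<le> 1"
  shows "emeasure (APRR d N p q) {w\<in>space (APRR d N p q). w (Vbond z i) = 1} = ennreal q"
proof -
  interpret product_prob_space "MM N p q" "index_set d" by (rule PPS)
  have "Vbond z i \<in> index_set d" using assms by (auto simp: index_set_def)
  then have "emeasure (APRR d N p q) {w\<in>space (APRR d N p q). w (Vbond z i) \<in> {1}} = emeasure (MM N p q (Vbond z i)) {1}"
    unfolding APRR_eq by (intro emeasure_PiM_Collect_single) auto
  then show ?thesis using assms bond_one[of q] by (simp add: coord_pmf_def)
qed



definition gF :: "nat \<Rightarrow> nat pmf \<Rightarrow> real \<Rightarrow> real \<Rightarrow> nat \<Rightarrow> ennreal" where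
  "gF d N p q t = emeasure (APRR d N p q) {w\<in>space (APRR d N p q). Fev w origin t}"

lemma ECnt:
  assumes d: "2 \<le> d" and q: "0 \<le> q" "q \<le> 1"
  shows "x \<in> vertices d \<Longrightarrow> (\<integral>\<^sup>+w. Cnt d w x k \<partial>APRR d N p q)
     \<le> suminf (gF d N p q) * (of_nat (d-1) * ennreal q * suminf (gF d N p q))^k"
proof (induction k arbitrary: x)
  case 0
  have "(\<integral>\<^sup>+w. Cnt d w x 0 \<partial>APRR d N p q) = (\<Sum>tf. \<integral>\<^sup>+w. (if Fev w x tf then 1 else 0) \<partial>APRR d N p q)"
    by (simp add: nn_integral_suminf)
  also have "\<dots> = (\<Sum>tf. gF d N p q tf)"
    using 0 d by (simp add: int_if transl gF_def)
  finally show ?case by simp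
next
  case (Suc k)
  let ?O = "APRR d N p q"
  let ?G = "\<Sum>t. gF d N p q t"
  let ?X = "of_nat (d-1) * ennreal q * ?G"
  let ?B = "?G * ?X ^ k"
  have x: "x \<in> vertices d" by fact
  have d0: "0 < d" using d by simp
  have key: "(\<integral>\<^sup>+w. (if Fev w x t \<and> w (Vbond (pt x t) i) = 1 then 1 else 0) * Cnt d w (zz x t i) k \<partial>?O)
      \<le> gF d N p q t * (ennreal q * ?B)" if i: "i \<in> {1..<d}" for t i
  proof -
    define C1 where "C1 = {j \<in> index_set d. \<exists>l. j = Range (pt x l) \<or> (\<exists>n. j = Hbond (pt x l) n)}"
    define C2 where "C2 = {j \<in> index_set d. hgt d (vtx j) > hgt d x \<or> (hgt d (vtx j) = hgt d x \<and> (\<exists>z l. j = Vbond z l))}"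
    define C3 where "C3 = {Vbond (pt x t) i}"
    define C4 where "C4 = {j \<in> index_set d. hgt d (vtx j) \<ge> hgt d x + 1}"
    have ptv: "pt x l \<in> vertices d" for l using pt_vert[OF x d0] .
    have "Range x \<in> index_set d" using x by (auto simp: index_set_def)
    then have C1ne: "C1 \<noteq> {}" unfolding C1_def by (auto intro!: exI[of _ 0])
    have C3I: "C3 \<subseteq> index_set d" using i ptv by (auto simp: C3_def index_set_def)
    have hz: "hgt d (zz x t i) = hgt d x + 1" using i by (intro hgt_zz) auto
    have "(\<integral>\<^sup>+w. (if Fev w x t \<and> w (Vbond (pt x t) i) = 1 then 1 else 0) * Cnt d w (zz x t i) k \<partial>?O)
        = (\<integral>\<^sup>+w. (if Fev w x t then 1 else 0) * ((if w (Vbond (pt x t) i) = 1 then 1 else 0) * Cnt d w (zz x t i) k) \<partial>?O)"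
      by (rule nn_integral_cong) simp
    also have "\<dots> = (\<integral>\<^sup>+w. (if Fev w x t then 1 else 0) \<partial>?O) * (\<integral>\<^sup>+w. (if w (Vbond (pt x t) i) = 1 then 1 else 0) * Cnt d w (zz x t i) k \<partial>?O)"
    proof (rule indepO[of C1 d C2])
      show "C1 \<subseteq> index_set d" "C2 \<subseteq> index_set d" "C1 \<noteq> {}" using C1ne by (auto simp: C1_def C2_def)
      show "C1 \<inter> C2 = {}" by (auto simp: C1_def C2_def)
    next
      fix w w' assume w: "w \<in> space ?O" "w' \<in> space ?O" "\<forall>j\<in>C1. w j = w' j"
      have "Fev w x t = Fev w' x t"
        by (rule Fev_dep) (intro agree_space[OF w]; auto simp: C1_def)+
      then show "(if Fev w x t then 1 else 0) = (if Fev w' x t then 1 else (0::ennreal))" by simp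
    next
      fix w w' assume w: "w \<in> space ?O" "w' \<in> space ?O" "\<forall>j\<in>C2. w j = w' j"
      have "w (Vbond (pt x t) i) = w' (Vbond (pt x t) i)"
        by (intro agree_space[OF w]) (auto simp: C2_def)
      moreover have "Cnt d w (zz x t i) k = Cnt d w' (zz x t i) k"
        by (rule Cnt_dep) (intro agree_space[OF w]; use hz in \<open>auto simp: C2_def\<close>)
      ultimately show "(if w (Vbond (pt x t) i) = 1 then 1 else 0) * Cnt d w (zz x t i) k
          = (if w' (Vbond (pt x t) i) = 1 then 1 else 0) * Cnt d w' (zz x t i) k" by simp
    qed auto
    also have "(\<integral>\<^sup>+w. (if w (Vbond (pt x t) i) = 1 then 1 else 0) * Cnt d w (zz x t i) k \<partial>?O)
        = (\<integral>\<^sup>+w. (if w (Vbond (pt x t) i) = 1 then 1 else 0) \<partial>?O) * (\<integral>\<^sup>+w. Cnt d w (zz x t i) k \<partial>?O)"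
    proof (rule indepO[of C3 d C4])
      show "C3 \<subseteq> index_set d" "C4 \<subseteq> index_set d" "C3 \<noteq> {}" using C3I by (auto simp: C3_def C4_def)
      show "C3 \<inter> C4 = {}" by (auto simp: C3_def C4_def)
    next
      fix w w' assume w: "w \<in> space ?O" "w' \<in> space ?O" "\<forall>j\<in>C3. w j = w' j"
      then show "(if w (Vbond (pt x t) i) = 1 then 1 else 0) = (if w' (Vbond (pt x t) i) = 1 then 1 else (0::ennreal))"
        by (simp add: C3_def)
    next
      fix w w' assume w: "w \<in> space ?O" "w' \<in> space ?O" "\<forall>j\<in>C4. w j = w' j"
      show "Cnt d w (zz x t i) k = Cnt d w' (zz x t i) k"
        by (rule Cnt_dep) (intro agree_space[OF w]; use hz in \<open>auto simp: C4_def\<close>)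
    qed auto
    also have "(\<integral>\<^sup>+w. (if Fev w x t then 1 else 0) \<partial>?O) = gF d N p q t"
      using x d0 by (simp add: int_if transl gF_def)
    also have "(\<integral>\<^sup>+w. (if w (Vbond (pt x t) i) = 1 then 1 else 0) \<partial>?O) = ennreal q"
      using i q Pvert[OF ptv, of i q N p] by (simp add: int_if)
    also have "(\<integral>\<^sup>+w. Cnt d w (zz x t i) k \<partial>?O) \<le> ?B"
      using Suc.IH[of "zz x t i"] zz_vert[OF x, of i t] i by auto
    finally show ?thesis by (simp add: mult_left_mono)
  qed
  have "(\<integral>\<^sup>+w. Cnt d w x (Suc k) \<partial>?O)
      = (\<Sum>t. \<Sum>i\<in>{1..<d}. \<integral>\<^sup>+w. (if Fev w x t \<and> w (Vbond (pt x t) i) = 1 then 1 else 0) * Cnt d w (zz x t i) k \<partial>?O)"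
    by (simp add: nn_integral_suminf nn_integral_sum)
  also have "\<dots> \<le> (\<Sum>t. \<Sum>i\<in>{1..<d}. gF d N p q t * (ennreal q * ?B))"
    by (intro suminf_le summableI sum_mono key) auto
  also have "\<dots> = (\<Sum>t. (of_nat (d-1) * ennreal q * ?B) * gF d N p q t)"
    by (intro arg_cong[where f=suminf] ext) (simp add: ac_simps)
  also have "\<dots> = (of_nat (d-1) * ennreal q * ?B) * ?G"
    by (rule ennreal_suminf_cmult)
  also have "\<dots> = ?G * ?X ^ Suc k"
    by (simp only: power_Suc ac_simps)
  finally show ?case .
qed



lemma bond_zero: "0 \<le> p \<Longrightarrow> p \<le> 1 \<Longrightarrow> emeasure (measure_pmf (bond_pmf p)) {0} = ennreal (1 - p)"
proof -
  assume q: "0 \<le> p" "p \<le> 1"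
  have "{x. \<not> x} = {False}" by auto
  then show ?thesis using q by (simp add: bond_pmf_def emeasure_pmf_single pmf_map measure_pmf_single vimage_def)
qed

definition eps0 :: "nat pmf \<Rightarrow> real \<Rightarrow> nat \<Rightarrow> real" where
  "eps0 N p M0 = measure_pmf.prob N {..M0} * (1 - p) ^ M0"

definition rr :: "nat pmf \<Rightarrow> real \<Rightarrow> nat \<Rightarrow> nat \<Rightarrow> real" where
  "rr N p M0 m = max (measure_pmf.prob N {..m}) (eps0 N p M0)"

lemma noJmp_a:
  assumes z: "z \<in> vertices d"
  shows "emeasure (APRR d N p q) {w\<in>space (APRR d N p q). \<not> Jmp w z m} \<ge> ennreal (measure_pmf.prob N {..m})"
proof -
  interpret product_prob_space "MM N p q" "index_set d" by (rule PPS)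
  have R: "Range z \<in> index_set d" using z by (auto simp: index_set_def)
  have "emeasure (APRR d N p q) {w\<in>space (APRR d N p q). w (Range z) \<in> {..m}} = emeasure (MM N p q (Range z)) {..m}"
    unfolding APRR_eq using R by (intro emeasure_PiM_Collect_single) auto
  also have "\<dots> = ennreal (measure_pmf.prob N {..m})"
    by (simp add: coord_pmf_def measure_pmf.emeasure_eq_measure)
  finally have e: "emeasure (APRR d N p q) {w\<in>space (APRR d N p q). w (Range z) \<in> {..m}} = ennreal (measure_pmf.prob N {..m})" .
  have "{w\<in>space (APRR d N p q). w (Range z) \<in> {..m}} \<subseteq> {w\<in>space (APRR d N p q). \<not> Jmp w z m}"
    by (auto simp: Jmp_def)
  then have "emeasure (APRR d N p q) {w\<in>space (APRR d N p q). w (Range z) \<in> {..m}} \<le> emeasure (APRR d N p q) {w\<in>space (APRR d N p q). \<not> Jmp w z m}"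
    by (intro emeasure_mono) measurable
  then show ?thesis using e by simp
qed

lemma noJmp_b:
  assumes z: "z \<in> vertices d" and p: "0 \<le> p" "p \<le> 1"
  shows "emeasure (APRR d N p q) {w\<in>space (APRR d N p q). \<not> Jmp w z m} \<ge> ennreal (eps0 N p M0)"
proof -
  interpret product_prob_space "MM N p q" "index_set d" by (rule PPS)
  define J where "J = insert (Range z) (Hbond z ` {1..M0})"
  define X where "X = (\<lambda>i. if i = Range z then {..M0} else {0::nat})"
  have JI: "J \<subseteq> index_set d" using z by (auto simp: J_def index_set_def)
  have "emeasure (APRR d N p q) {w\<in>space (APRR d N p q). \<forall>i\<in>J. w i \<in> X i} = (\<Prod>i\<in>J. emeasure (MM N p q i) (X i))"
    unfolding APRR_eq using JI by (intro emeasure_PiM_Collect) (auto simp: J_def)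
  also have "\<dots> = emeasure (measure_pmf N) {..M0} * (\<Prod>i\<in>Hbond z ` {1..M0}. emeasure (MM N p q i) (X i))"
    unfolding J_def by (subst prod.insert) (auto simp: X_def coord_pmf_def)
  also have "(\<Prod>i\<in>Hbond z ` {1..M0}. emeasure (MM N p q i) (X i)) = (\<Prod>n\<in>{1..M0}. ennreal (1 - p))"
    by (subst prod.reindex) (auto simp: inj_on_def X_def coord_pmf_def bond_zero[OF p])
  also have "\<dots> = ennreal ((1 - p) ^ M0)"
    using p by (simp add: prod_ennreal[symmetric] ennreal_power)
  finally have e: "emeasure (APRR d N p q) {w\<in>space (APRR d N p q). \<forall>i\<in>J. w i \<in> X i} = ennreal (eps0 N p M0)"
    using p by (simp add: eps0_def measure_pmf.emeasure_eq_measure ennreal_mult)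
  have "{w\<in>space (APRR d N p q). \<forall>i\<in>J. w i \<in> X i} \<subseteq> {w\<in>space (APRR d N p q). \<not> Jmp w z m}"
  proof safe
    fix w assume w: "\<forall>i\<in>J. w i \<in> X i" "Jmp w z m"
    then obtain n where n: "m < n" "n \<le> w (Range z)" "w (Hbond z n) = 1" by (auto simp: Jmp_def)
    have "w (Range z) \<le> M0" using w(1) by (auto simp: J_def X_def)
    then have "Hbond z n \<in> J" using n by (auto simp: J_def)
    then show False using w(1) n by (auto simp: X_def)
  qed
  then have "emeasure (APRR d N p q) {w\<in>space (APRR d N p q). \<forall>i\<in>J. w i \<in> X i} \<le> emeasure (APRR d N p q) {w\<in>space (APRR d N p q). \<not> Jmp w z m}"
    by (intro emeasure_mono) measurable
  then show ?thesis using e by simp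
qed

lemma noJmp:
  assumes z: "z \<in> vertices d" and p: "0 \<le> p" "p \<le> 1"
  shows "emeasure (APRR d N p q) {w\<in>space (APRR d N p q). \<not> Jmp w z m} \<ge> ennreal (rr N p M0 m)"
  using noJmp_a[OF z] noJmp_b[OF z p] by (simp add: rr_def max_def)



definition HB :: "nat \<Rightarrow> (nat \<Rightarrow> int) \<Rightarrow> nat set \<Rightarrow> idx set" where
  "HB d a S = {j \<in> index_set d. \<exists>i\<in>S. j = Range (pt a i) \<or> (\<exists>n. j = Hbond (pt a i) n)}"

lemma pt_inj: "pt a i = pt a j \<Longrightarrow> i = j"
  by (auto simp: pt_def shift_def fun_eq_iff dest: spec[of _ 0])

lemma emeasure_space_APRR: "emeasure (APRR d N p q) (space (APRR d N p q)) = 1"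
proof -
  interpret product_prob_space "MM N p q" "index_set d" by (rule PPS)
  show ?thesis unfolding APRR_eq by (rule P.emeasure_space_1)
qed

lemma prob_APRR: "prob_space (APRR d N p q)"
  by (rule prob_spaceI) (rule emeasure_space_APRR)

lemma emeasure_conj:
  assumes "Measurable.pred M P" "Measurable.pred M Q"
  shows "emeasure M {w\<in>space M. P w \<and> Q w} = (\<integral>\<^sup>+w. (if P w then 1 else 0) * (if Q w then 1 else 0) \<partial>M)"
proof -
  have "emeasure M {w\<in>space M. P w \<and> Q w} = (\<integral>\<^sup>+w. (if P w \<and> Q w then 1 else 0) \<partial>M)"
    using assms by (subst int_if) auto
  also have "\<dots> = (\<integral>\<^sup>+w. (if P w then 1 else 0) * (if Q w then 1 else 0) \<partial>M)"
    by (rule nn_integral_cong) auto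
  finally show ?thesis .
qed

lemma cutprod:
  assumes a: "a \<in> vertices d" and d: "0 < d" and p: "0 \<le> p" "p \<le> 1"
  shows "finite S \<Longrightarrow> emeasure (APRR d N p q) {w\<in>space (APRR d N p q). \<forall>i\<in>S. \<not> Jmp w (pt a i) (m i)}
     \<ge> (\<Prod>i\<in>S. ennreal (rr N p M0 (m i)))"
proof (induction S rule: finite_induct)
  case empty
  then show ?case by (simp add: emeasure_space_APRR)
next
  case (insert j S)
  let ?O = "APRR d N p q"
  have ptv: "pt a l \<in> vertices d" for l using pt_vert[OF a d] .
  have "emeasure ?O {w\<in>space ?O. \<forall>i\<in>insert j S. \<not> Jmp w (pt a i) (m i)}
      = emeasure ?O {w\<in>space ?O. \<not> Jmp w (pt a j) (m j) \<and> (\<forall>i\<in>S. \<not> Jmp w (pt a i) (m i))}"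
    by simp
  also have "\<dots> = (\<integral>\<^sup>+w. (if \<not> Jmp w (pt a j) (m j) then 1 else 0) * (if (\<forall>i\<in>S. \<not> Jmp w (pt a i) (m i)) then 1 else 0) \<partial>?O)"
    using insert(1) by (intro emeasure_conj) measurable
  also have "\<dots> = (\<integral>\<^sup>+w. (if \<not> Jmp w (pt a j) (m j) then 1 else 0) \<partial>?O) * (\<integral>\<^sup>+w. (if (\<forall>i\<in>S. \<not> Jmp w (pt a i) (m i)) then 1 else 0) \<partial>?O)"
  proof (rule indepO[of "index_set d - HB d a S" d "HB d a S"])
    have "Range (pt a j) \<in> index_set d" using ptv by (auto simp: index_set_def)
    moreover have "Range (pt a j) \<notin> HB d a S" using insert(2) by (auto simp: HB_def dest: pt_inj)
    ultimately show "index_set d - HB d a S \<noteq> {}" by blast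
  next
    fix w w' assume w: "w \<in> space ?O" "w' \<in> space ?O" "\<forall>i\<in>index_set d - HB d a S. w i = w' i"
    have "Jmp w (pt a j) (m j) = Jmp w' (pt a j) (m j)"
    proof -
      have "w (Range (pt a j)) = w' (Range (pt a j))"
        by (intro agree_space[OF w]) (use insert(2) in \<open>auto simp: HB_def dest: pt_inj\<close>)
      moreover have "w (Hbond (pt a j) n) = w' (Hbond (pt a j) n)" for n
        by (intro agree_space[OF w]) (use insert(2) in \<open>auto simp: HB_def dest: pt_inj\<close>)
      ultimately show ?thesis by (simp add: Jmp_def)
    qed
    then show "(if \<not> Jmp w (pt a j) (m j) then 1 else 0) = (if \<not> Jmp w' (pt a j) (m j) then 1 else (0::ennreal))" by simp
  next
    fix w w' assume w: "w \<in> space ?O" "w' \<in> space ?O" "\<forall>i\<in>HB d a S. w i = w' i"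
    have "Jmp w (pt a i) (m i) = Jmp w' (pt a i) (m i)" if "i \<in> S" for i
    proof -
      have "w (Range (pt a i)) = w' (Range (pt a i))"
        by (intro agree_space[OF w]) (use that in \<open>auto simp: HB_def\<close>)
      moreover have "w (Hbond (pt a i) n) = w' (Hbond (pt a i) n)" for n
        by (intro agree_space[OF w]) (use that in \<open>auto simp: HB_def\<close>)
      ultimately show ?thesis by (simp add: Jmp_def)
    qed
    then show "(if (\<forall>i\<in>S. \<not> Jmp w (pt a i) (m i)) then 1 else 0) = (if (\<forall>i\<in>S. \<not> Jmp w' (pt a i) (m i)) then 1 else (0::ennreal))"
      by simp
  qed (use insert(1) in \<open>auto simp: HB_def\<close>)
  also have "(\<integral>\<^sup>+w. (if \<not> Jmp w (pt a j) (m j) then 1 else 0) \<partial>?O) = emeasure ?O {w\<in>space ?O. \<not> Jmp w (pt a j) (m j)}"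
    by (intro int_if) measurable
  also have "(\<integral>\<^sup>+w. (if (\<forall>i\<in>S. \<not> Jmp w (pt a i) (m i)) then 1 else 0) \<partial>?O) = emeasure ?O {w\<in>space ?O. \<forall>i\<in>S. \<not> Jmp w (pt a i) (m i)}"
    using insert(1) by (intro int_if) measurable
  finally have e: "emeasure ?O {w\<in>space ?O. \<forall>i\<in>insert j S. \<not> Jmp w (pt a i) (m i)}
     = emeasure ?O {w\<in>space ?O. \<not> Jmp w (pt a j) (m j)} * emeasure ?O {w\<in>space ?O. \<forall>i\<in>S. \<not> Jmp w (pt a i) (m i)}" .
  have "(\<Prod>i\<in>insert j S. ennreal (rr N p M0 (m i))) = ennreal (rr N p M0 (m j)) * (\<Prod>i\<in>S. ennreal (rr N p M0 (m i)))"
    using insert(1,2) by simp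
  also have "\<dots> \<le> emeasure ?O {w\<in>space ?O. \<not> Jmp w (pt a j) (m j)} * emeasure ?O {w\<in>space ?O. \<forall>i\<in>S. \<not> Jmp w (pt a i) (m i)}"
    by (intro mult_mono noJmp[OF ptv p] insert(3)) auto
  finally show ?case using e by simp
qed



definition Cut :: "(idx \<Rightarrow> nat) \<Rightarrow> nat \<Rightarrow> bool" where
  "Cut w s \<longleftrightarrow> (\<forall>i\<in>{..<s}. \<not> Jmp w (pt origin i) (s - 1 - i))"

lemma Cut_meas[measurable]: "Measurable.pred (APRR d N p q) (\<lambda>w. Cut w s)"
  unfolding Cut_def by measurable

lemma D_split:
  assumes d: "2 \<le> d"
  shows "emeasure (APRR d N p q) {w\<in>space (APRR d N p q). Cut w s \<and> Fev w (pt origin s) t}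
     = emeasure (APRR d N p q) {w\<in>space (APRR d N p q). Cut w s} * gF d N p q t"
proof -
  let ?O = "APRR d N p q"
  let ?C2 = "HB d origin {s..}"
  have ptv: "pt origin l \<in> vertices d" for l using pt_vert[OF origin_vert, of d] d by simp
  have "emeasure ?O {w\<in>space ?O. Cut w s \<and> Fev w (pt origin s) t}
     = (\<integral>\<^sup>+w. (if Cut w s then 1 else 0) * (if Fev w (pt origin s) t then 1 else 0) \<partial>?O)"
    by (intro emeasure_conj) measurable
  also have "\<dots> = (\<integral>\<^sup>+w. (if Cut w s then 1 else 0) \<partial>?O) * (\<integral>\<^sup>+w. (if Fev w (pt origin s) t then 1 else 0) \<partial>?O)"
  proof (rule indepO[of "index_set d - ?C2" d ?C2])
    have "Vbond origin 1 \<in> index_set d" using d origin_vert by (auto simp: index_set_def)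
    moreover have "Vbond origin 1 \<notin> ?C2" by (auto simp: HB_def)
    ultimately show "index_set d - ?C2 \<noteq> {}" by blast
  next
    fix w w' assume w: "w \<in> space ?O" "w' \<in> space ?O" "\<forall>i\<in>index_set d - ?C2. w i = w' i"
    have "Jmp w (pt origin i) m = Jmp w' (pt origin i) m" if "i < s" for i m
    proof -
      have "w (Range (pt origin i)) = w' (Range (pt origin i))"
        by (intro agree_space[OF w]) (use that in \<open>auto simp: HB_def dest: pt_inj\<close>)
      moreover have "w (Hbond (pt origin i) n) = w' (Hbond (pt origin i) n)" for n
        by (intro agree_space[OF w]) (use that in \<open>auto simp: HB_def dest: pt_inj\<close>)
      ultimately show ?thesis by (simp add: Jmp_def)
    qed
    then show "(if Cut w s then 1 else 0) = (if Cut w' s then 1 else (0::ennreal))"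
      by (simp add: Cut_def)
  next
    fix w w' assume w: "w \<in> space ?O" "w' \<in> space ?O" "\<forall>i\<in>?C2. w i = w' i"
    have "Fev w (pt origin s) t = Fev w' (pt origin s) t"
      by (rule Fev_dep; intro agree_space[OF w]) (auto simp: HB_def)
    then show "(if Fev w (pt origin s) t then 1 else 0) = (if Fev w' (pt origin s) t then 1 else (0::ennreal))"
      by simp
  qed (auto simp: HB_def)
  also have "(\<integral>\<^sup>+w. (if Cut w s then 1 else 0) \<partial>?O) = emeasure ?O {w\<in>space ?O. Cut w s}"
    by (intro int_if) measurable
  also have "(\<integral>\<^sup>+w. (if Fev w (pt origin s) t then 1 else 0) \<partial>?O) = gF d N p q t"
    using ptv d by (simp add: int_if transl gF_def)
  finally show ?thesis .
qed

lemma D_disj: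
  assumes "s < s'" "s' \<le> n" "Fev w (pt origin s) (n - s)"
  shows "\<not> Cut w s'"
proof -
  have "s' - s - 1 < n - s" using assms by auto
  with assms(3) obtain i where i: "i \<le> s' - s - 1" "Jmp w (pt origin (s + i)) (s' - s - 1 - i)"
    unfolding Fev_def by fastforce
  then have "s + i < s'" "s' - 1 - (s + i) = s' - s - 1 - i" using assms by auto
  then show ?thesis using i unfolding Cut_def by force
qed

lemma Cut_bound:
  assumes d: "2 \<le> d" and p: "0 \<le> p" "p \<le> 1"
  shows "emeasure (APRR d N p q) {w\<in>space (APRR d N p q). Cut w s}
     \<ge> (\<Prod>m\<in>(\<lambda>i. s - 1 - i) ` {..<s}. ennreal (rr N p M0 m))"
proof -
  have "inj_on (\<lambda>i. s - 1 - i) {..<s}" by (auto simp: inj_on_def)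
  then have "(\<Prod>m\<in>(\<lambda>i. s - 1 - i) ` {..<s}. ennreal (rr N p M0 m)) = (\<Prod>i\<in>{..<s}. ennreal (rr N p M0 (s - 1 - i)))"
    by (simp add: prod.reindex)
  also have "\<dots> \<le> emeasure (APRR d N p q) {w\<in>space (APRR d N p q). \<forall>i\<in>{..<s}. \<not> Jmp w (pt origin i) (s - 1 - i)}"
    using d by (intro cutprod[OF origin_vert _ p]) auto
  finally show ?thesis by (simp add: Cut_def)
qed

lemma sum_D:
  assumes d: "2 \<le> d"
  shows "(\<Sum>s\<le>n. emeasure (APRR d N p q) {w\<in>space (APRR d N p q). Cut w s} * gF d N p q (n - s)) \<le> 1"
proof -
  let ?O = "APRR d N p q"
  let ?D = "\<lambda>s. {w\<in>space ?O. Cut w s \<and> Fev w (pt origin s) (n - s)}"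
  have "(\<Sum>s\<le>n. emeasure ?O {w\<in>space ?O. Cut w s} * gF d N p q (n - s)) = (\<Sum>s\<le>n. emeasure ?O (?D s))"
    using d by (simp add: D_split)
  also have "\<dots> = emeasure ?O (\<Union>s\<le>n. ?D s)"
  proof (rule sum_emeasure)
    show "disjoint_family_on ?D {..n}"
      unfolding disjoint_family_on_def
    proof (intro ballI impI)
      fix s s' assume "s \<in> {..n}" "s' \<in> {..n}" "s \<noteq> s'"
      then show "?D s \<inter> ?D s' = {}"
        using D_disj[of s s' n] D_disj[of s' s n] by (cases "s < s'") auto
    qed
  qed auto
  also have "\<dots> \<le> 1"
    using prob_space.emeasure_le_1[OF prob_APRR] by simp
  finally show ?thesis .
qed

lemma sum_rev: "(\<Sum>s\<le>n. f (n - s)) = (\<Sum>t\<le>(n::nat). f t)"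
proof -
  have "inj_on (\<lambda>s. n - s) {..n}" by (auto simp: inj_on_def)
  moreover have "(\<lambda>s. n - s) ` {..n} = {..n}"
  proof -
    have "x \<in> (\<lambda>s. n - s) ` {..n}" if "x \<le> n" for x
      using that by (intro image_eqI[of _ _ "n - x"]) auto
    then show ?thesis by auto
  qed
  ultimately show ?thesis using sum.reindex[of "\<lambda>s. n - s" "{..n}" f] by simp
qed

lemma gF_bound:
  assumes d: "2 \<le> d" and p: "0 \<le> p" "p \<le> 1"
  and c: "\<And>S. finite S \<Longrightarrow> c \<le> (\<Prod>m\<in>S. rr N p M0 m)" and c0: "0 \<le> c"
  and rr0: "\<And>m. 0 \<le> rr N p M0 m"
  shows "ennreal c * suminf (gF d N p q) \<le> 1"
proof -
  have part: "ennreal c * (\<Sum>t<Suc n. gF d N p q t) \<le> 1" for n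
  proof -
    have "ennreal c * (\<Sum>t<Suc n. gF d N p q t) = (\<Sum>s\<le>n. ennreal c * gF d N p q (n - s))"
      by (simp add: lessThan_Suc_atMost sum_rev[of "\<lambda>t. ennreal c * gF d N p q t"] sum_distrib_left)
    also have "\<dots> \<le> (\<Sum>s\<le>n. emeasure (APRR d N p q) {w\<in>space (APRR d N p q). Cut w s} * gF d N p q (n - s))"
    proof (intro sum_mono mult_right_mono)
      fix s
      have "ennreal c \<le> ennreal (\<Prod>m\<in>(\<lambda>i. s - 1 - i) ` {..<s}. rr N p M0 m)"
        by (intro ennreal_leI c) auto
      also have "\<dots> = (\<Prod>m\<in>(\<lambda>i. s - 1 - i) ` {..<s}. ennreal (rr N p M0 m))"
        using rr0 by (simp add: prod_ennreal)
      also have "\<dots> \<le> emeasure (APRR d N p q) {w\<in>space (APRR d N p q). Cut w s}"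
        by (rule Cut_bound[OF d p])
      finally show "ennreal c \<le> emeasure (APRR d N p q) {w\<in>space (APRR d N p q). Cut w s}" .
    qed auto
    also have "\<dots> \<le> 1" by (rule sum_D[OF d])
    finally show ?thesis .
  qed
  have "ennreal c * suminf (gF d N p q) = (\<Sum>t. ennreal c * gF d N p q t)"
    by (simp add: ennreal_suminf_cmult)
  also have "\<dots> \<le> 1"
  proof (rule suminf_le_const)
    fix n
    show "(\<Sum>t<n. ennreal c * gF d N p q t) \<le> 1"
    proof (cases n)
      case 0 then show ?thesis by simp
    next
      case (Suc n') then show ?thesis using part[of n'] by (simp only: sum_distrib_left)
    qed
  qed simp
  finally show ?thesis .
qed



lemma weier:
  fixes a :: "nat \<Rightarrow> real"
  assumes "finite S" "\<And>m. m \<in> S \<Longrightarrow> 0 \<le> a m" "\<And>m. m \<in> S \<Longrightarrow> a m \<le> 1"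
  shows "1 - (\<Sum>m\<in>S. a m) \<le> (\<Prod>m\<in>S. (1 - a m))"
  using assms
proof (induction S rule: finite_induct)
  case empty then show ?case by simp
next
  case (insert j S)
  have IH: "1 - (\<Sum>m\<in>S. a m) \<le> (\<Prod>m\<in>S. (1 - a m))" using insert by auto
  have aj: "0 \<le> a j" "a j \<le> 1" using insert by auto
  have s0: "0 \<le> (\<Sum>m\<in>S. a m)" using insert by (auto intro: sum_nonneg)
  have "1 - (\<Sum>m\<in>insert j S. a m) = 1 - a j - (\<Sum>m\<in>S. a m)" using insert by simp
  also have "\<dots> \<le> (1 - a j) * (1 - (\<Sum>m\<in>S. a m))" using aj s0 by (simp add: algebra_simps mult_nonneg_nonneg)
  also have "\<dots> \<le> (1 - a j) * (\<Prod>m\<in>S. (1 - a m))" using IH aj by (intro mult_left_mono) auto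
  also have "\<dots> = (\<Prod>m\<in>insert j S. (1 - a m))" using insert by simp
  finally show ?case .
qed

lemma prod_lower:
  fixes r a :: "nat \<Rightarrow> real"
  assumes sa: "summable a" and a0: "\<And>m. 0 \<le> a m" and a1: "\<And>m. a m \<le> 1"
  and e: "0 < e" "e \<le> 1" and r1: "\<And>m. e \<le> r m" and r2: "\<And>m. 1 - a m \<le> r m"
  shows "\<exists>c>0. \<forall>S. finite S \<longrightarrow> c \<le> (\<Prod>m\<in>S. r m)"
proof -
  obtain i1 where i1: "norm (\<Sum>i. a (i + i1)) < 1/2"
    using suminf_exist_split[of "1/2" a] sa by auto
  have sa': "summable (\<lambda>i. a (i + i1))" using sa by (simp add: summable_iff_shift)
  have r0: "0 \<le> r m" for m using r1[of m] e by simp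
  define c where "c = e ^ i1 / 2"
  have "c > 0" using e by (simp add: c_def)
  moreover have "c \<le> (\<Prod>m\<in>S. r m)" if S: "finite S" for S
  proof -
    define S1 where "S1 = S \<inter> {..<i1}"
    define S2 where "S2 = S - {..<i1}"
    have fin: "finite S1" "finite S2" using S by (auto simp: S1_def S2_def)
    have split: "(\<Prod>m\<in>S. r m) = (\<Prod>m\<in>S1. r m) * (\<Prod>m\<in>S2. r m)"
    proof -
      have "S = S1 \<union> S2" "S1 \<inter> S2 = {}" by (auto simp: S1_def S2_def)
      then show ?thesis using fin by (simp add: prod.union_disjoint)
    qed
    have cS1: "card S1 \<le> i1"
    proof -
      have "card S1 \<le> card {..<i1}" by (rule card_mono) (auto simp: S1_def)
      then show ?thesis by simp
    qed
    have "e ^ i1 \<le> e ^ card S1" using e cS1 by (intro power_decreasing) auto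
    also have "\<dots> = (\<Prod>m\<in>S1. e)" by simp
    also have "\<dots> \<le> (\<Prod>m\<in>S1. r m)" using e r1 by (intro prod_mono) auto
    finally have P1: "e ^ i1 \<le> (\<Prod>m\<in>S1. r m)" .
    have sumS2: "(\<Sum>m\<in>S2. a m) \<le> 1/2"
    proof -
      have inj: "inj_on (\<lambda>m. m - i1) S2" by (auto simp: inj_on_def S2_def)
      have "(\<Sum>i\<in>(\<lambda>m. m - i1) ` S2. a (i + i1)) = (\<Sum>m\<in>S2. a (m - i1 + i1))"
        by (simp add: sum.reindex[OF inj])
      also have "\<dots> = (\<Sum>m\<in>S2. a m)" by (intro sum.cong) (auto simp: S2_def)
      finally have "(\<Sum>m\<in>S2. a m) = (\<Sum>i\<in>(\<lambda>m. m - i1) ` S2. a (i + i1))" by simp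
      also have "\<dots> \<le> (\<Sum>i. a (i + i1))"
        using fin sa' a0 by (intro sum_le_suminf) auto
      also have "\<dots> \<le> 1/2" using i1 by simp
      finally show ?thesis .
    qed
    have "1/2 \<le> 1 - (\<Sum>m\<in>S2. a m)" using sumS2 by simp
    also have "\<dots> \<le> (\<Prod>m\<in>S2. (1 - a m))" using fin a0 a1 by (intro weier) auto
    also have "\<dots> \<le> (\<Prod>m\<in>S2. r m)" using r2 a1 by (intro prod_mono) auto
    finally have P2: "1/2 \<le> (\<Prod>m\<in>S2. r m)" .
    have "c = e ^ i1 * (1/2)" by (simp add: c_def)
    also have "\<dots> \<le> (\<Prod>m\<in>S1. r m) * (\<Prod>m\<in>S2. r m)"
      using P1 P2 e by (intro mult_mono) (auto intro: prod_nonneg r0)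
    finally show ?thesis using split by simp
  qed
  ultimately show ?thesis by blast
qed



lemma exists_c:
  assumes EN: "(\<integral>\<^sup>+ n. ennreal (real n) \<partial>measure_pmf N) < \<infinity>" and p: "0 \<le> p" "p < 1"
  shows "\<exists>M0 c. c > 0 \<and> (\<forall>S. finite S \<longrightarrow> c \<le> (\<Prod>m\<in>S. rr N p M0 m)) \<and> (\<forall>m. 0 \<le> rr N p M0 m)"
proof -
  define a where "a m = 1 - measure_pmf.prob N {..m}" for m
  have a0: "0 \<le> a m" for m by (simp add: a_def)
  have a1: "a m \<le> 1" for m by (simp add: a_def)
  have ae: "ennreal (a m) = emeasure (measure_pmf N) {m<..}" for m
  proof -
    have "{m<..} = space (measure_pmf N) - {..m}" by auto
    then have "measure_pmf.prob N {m<..} = 1 - measure_pmf.prob N {..m}"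
      using measure_pmf.prob_compl[of "{..m}" N] by simp
    then show ?thesis by (simp add: a_def measure_pmf.emeasure_eq_measure)
  qed
  have pw: "ennreal (real n) = (\<Sum>m. indicator {m<..} n)" for n :: nat
  proof -
    have "(\<Sum>m. indicator {m<..} n :: ennreal) = (\<Sum>m\<in>{..<n}. indicator {m<..} n)"
      by (rule suminf_finite) auto
    also have "\<dots> = of_nat n" by simp
    finally show ?thesis by (simp add: ennreal_of_nat_eq_real_of_nat)
  qed
  have "(\<Sum>m. ennreal (a m)) = (\<Sum>m. emeasure (measure_pmf N) {m<..})" by (simp add: ae)
  also have "\<dots> = (\<integral>\<^sup>+ n. (\<Sum>m. indicator {m<..} n) \<partial>measure_pmf N)"
    by (subst nn_integral_suminf) auto
  also have "\<dots> = (\<integral>\<^sup>+ n. ennreal (real n) \<partial>measure_pmf N)" by (simp add: pw)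
  finally have "(\<Sum>m. ennreal (a m)) \<noteq> \<top>" using EN by simp
  then have sa: "summable a" using a0 by (intro summable_suminf_not_top) auto
  obtain M0 where M0: "M0 \<in> set_pmf N" using set_pmf_not_empty[of N] by blast
  have "0 < pmf N M0" using M0 by (simp add: pmf_positive)
  also have "pmf N M0 = measure_pmf.prob N {M0}" by (simp add: measure_pmf_single)
  also have "\<dots> \<le> measure_pmf.prob N {..M0}" by (rule measure_pmf.finite_measure_mono) auto
  finally have PM: "0 < measure_pmf.prob N {..M0}" .
  have e0: "0 < eps0 N p M0" using PM p by (simp add: eps0_def)
  have e1: "eps0 N p M0 \<le> 1"
    unfolding eps0_def using p by (intro mult_le_one) (auto intro: power_le_one)
  have r1: "eps0 N p M0 \<le> rr N p M0 m" for m by (simp add: rr_def)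
  have r2: "1 - a m \<le> rr N p M0 m" for m by (simp add: rr_def a_def)
  obtain c where c: "c > 0" "\<forall>S. finite S \<longrightarrow> c \<le> (\<Prod>m\<in>S. rr N p M0 m)"
    using prod_lower[OF sa a0 a1 e0 e1 r1 r2] by blast
  moreover have "\<forall>m. 0 \<le> rr N p M0 m"
  proof
    fix m show "0 \<le> rr N p M0 m" using r1[of m] e0 by linarith
  qed
  ultimately show ?thesis by blast
qed



lemma inj_map_vert: "inj_on (\<lambda>v. map v [0..<d]) (vertices d)"
proof (rule inj_onI)
  fix u v assume uv: "u \<in> vertices d" "v \<in> vertices d" "map u [0..<d] = map v [0..<d]"
  show "u = v"
  proof
    fix j show "u j = v j"
    proof (cases "j < d")
      case True then show ?thesis using uv(3) by (simp add: map_eq_conv)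
    next
      case False then show ?thesis using uv(1,2) by (simp add: vertices_def)
    qed
  qed
qed

lemma countable_vertices: "countable (vertices d)"
  by (rule countable_image_inj_on[OF _ inj_map_vert]) simp

lemma open_bond_vert: "open_bond d w x y \<Longrightarrow> 0 < d \<Longrightarrow> y \<in> vertices d \<and> x \<in> vertices d"
  unfolding open_bond_def using shift_vert[of x d] by auto

lemma reach_vert: "(open_bond d w)\<^sup>*\<^sup>* origin y \<Longrightarrow> 0 < d \<Longrightarrow> y \<in> vertices d"
  by (induction rule: rtranclp_induct) (auto simp: origin_vert dest: open_bond_vert)

lemma open_bond_meas[measurable]: "Measurable.pred (APRR d N p q) (\<lambda>w. open_bond d w x y)"
  unfolding open_bond_def by measurable

lemma relpow_meas: "0 < d \<Longrightarrow> Measurable.pred (APRR d N p q) (\<lambda>w. (open_bond d w ^^ m) x y)"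
proof (induction m arbitrary: y)
  case 0
  then show ?case by simp
next
  case (Suc m)
  note d = Suc.prems
  have "{w \<in> space (APRR d N p q). \<exists>z\<in>vertices d. (open_bond d w ^^ m) x z \<and> open_bond d w z y} \<in> sets (APRR d N p q)"
  proof (rule sets.sets_Collect_countable_Ex'[OF _ countable_vertices])
    fix z
    have [measurable]: "Measurable.pred (APRR d N p q) (\<lambda>w. (open_bond d w ^^ m) x z)" by (rule Suc.IH[OF d])
    show "{w \<in> space (APRR d N p q). (open_bond d w ^^ m) x z \<and> open_bond d w z y} \<in> sets (APRR d N p q)"
      by measurable
  qed
  moreover have "(open_bond d w ^^ Suc m) x y \<longleftrightarrow> (\<exists>z\<in>vertices d. (open_bond d w ^^ m) x z \<and> open_bond d w z y)" for w
    using d by (auto dest: open_bond_vert)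
  ultimately show ?case unfolding pred_def by simp
qed

lemma reach_meas: "0 < d \<Longrightarrow> Measurable.pred (APRR d N p q) (\<lambda>w. (open_bond d w)\<^sup>*\<^sup>* x y)"
  unfolding rtranclp_power using relpow_meas by measurable

definition nrm :: "nat \<Rightarrow> (nat \<Rightarrow> int) \<Rightarrow> nat" where
  "nrm d y = (\<Sum>j<d. nat \<bar>y j\<bar>)"

lemma finite_ball: "finite {y\<in>vertices d. nrm d y < n}"
proof -
  let ?f = "\<lambda>v. map v [0..<d]"
  have "?f ` {y\<in>vertices d. nrm d y < n} \<subseteq> {xs. set xs \<subseteq> {-int n..int n} \<and> length xs = d}"
  proof clarsimp
    fix y j assume y: "nrm d y < n" "j < d"
    have "nat \<bar>y j\<bar> \<le> nrm d y" unfolding nrm_def using y(2)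
      by (intro member_le_sum) auto
    then show "- int n \<le> y j \<and> y j \<le> int n" using y(1) by linarith
  qed
  then have "finite (?f ` {y\<in>vertices d. nrm d y < n})"
    by (rule finite_subset) (intro finite_lists_length_eq, simp)
  then show ?thesis
    by (rule finite_imageD) (rule inj_on_subset[OF inj_map_vert], auto)
qed

lemma infinite_iff:
  assumes d: "0 < d" shows "infinite {y. (open_bond d w)\<^sup>*\<^sup>* origin y} \<longleftrightarrow> (\<forall>n. \<exists>y\<in>vertices d. n \<le> nrm d y \<and> (open_bond d w)\<^sup>*\<^sup>* origin y)"
  (is "infinite ?R \<longleftrightarrow> _")
proof
  assume inf: "infinite ?R"
  show "\<forall>n. \<exists>y\<in>vertices d. n \<le> nrm d y \<and> (open_bond d w)\<^sup>*\<^sup>* origin y"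
  proof (rule ccontr)
    assume "\<not> ?thesis"
    then obtain n where "\<forall>y\<in>vertices d. (open_bond d w)\<^sup>*\<^sup>* origin y \<longrightarrow> nrm d y < n" by (auto simp: not_le)
    then have "?R \<subseteq> {y\<in>vertices d. nrm d y < n}" using reach_vert d by blast
    then show False using inf finite_ball finite_subset by blast
  qed
next
  assume all: "\<forall>n. \<exists>y\<in>vertices d. n \<le> nrm d y \<and> (open_bond d w)\<^sup>*\<^sup>* origin y"
  show "infinite ?R"
  proof
    assume fin: "finite ?R"
    obtain y where y: "Suc (Max (nrm d ` ?R)) \<le> nrm d y" "(open_bond d w)\<^sup>*\<^sup>* origin y"
      using all by blast
    then have "nrm d y \<le> Max (nrm d ` ?R)" using fin by (intro Max_ge) auto
    then show False using y by simp
  qed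
qed

lemma perc_meas: "0 < d \<Longrightarrow> perc_event d \<inter> space (APRR d N p q) \<in> sets (APRR d N p q)"
proof -
  assume d: "0 < d"
  note reach_meas[OF d, measurable]
  have "perc_event d \<inter> space (APRR d N p q) = {w\<in>space (APRR d N p q). \<forall>n. \<exists>y\<in>vertices d. n \<le> nrm d y \<and> (open_bond d w)\<^sup>*\<^sup>* origin y}"
    by (auto simp: perc_event_def infinite_iff[OF d])
  also have "\<dots> \<in> sets (APRR d N p q)"
  proof (rule sets.sets_Collect_countable_All)
    fix n
    show "{w\<in>space (APRR d N p q). \<exists>y\<in>vertices d. n \<le> nrm d y \<and> (open_bond d w)\<^sup>*\<^sup>* origin y} \<in> sets (APRR d N p q)"
      by (rule sets.sets_Collect_countable_Ex'[OF _ countable_vertices]) measurable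
  qed
  finally show ?thesis .
qed



theorem theorem3:
  fixes d :: nat and N :: "nat pmf" and p :: real
  assumes "d \<ge> 2"
    and "(\<integral>\<^sup>+ n. ennreal (real n) \<partial>measure_pmf N) < \<infinity>"
    and "0 \<le> p" and "p < 1"
  shows "\<exists>q. 0 < q \<and> q \<le> 1 \<and>
           perc_event d \<inter> space (APRR d N p q) \<in> sets (APRR d N p q) \<and>
           theta d N p q = 0"
proof -
  have d2: "2 \<le> d" by fact
  have d0: "0 < d" using d2 by simp
  have p: "0 \<le> p" "p \<le> 1" using assms by auto
  obtain M0 c where c: "c > 0" "\<forall>S. finite S \<longrightarrow> c \<le> (\<Prod>m\<in>S. rr N p M0 m)" "\<forall>m. 0 \<le> rr N p M0 m"
    using exists_c[OF assms(2) assms(3) assms(4)] by blast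
  define Gb where "Gb = 1 / c"
  have Gb0: "0 < Gb" using c by (simp add: Gb_def)
  define r where "r = real (d - 1)"
  have dm: "1 \<le> r" using d2 by (simp add: r_def)
  define q where "q = 1 / (2 * r * (Gb + 1))"
  have q0: "0 < q" using Gb0 dm by (simp add: q_def)
  have q1: "q \<le> 1"
  proof -
    have "1 * 1 \<le> r * (Gb + 1)" using dm Gb0 by (intro mult_mono) auto
    then have D: "1 \<le> 2 * r * (Gb + 1)" by linarith
    have "1 / (2 * r * (Gb + 1)) \<le> 1"
      by (rule divide_le_eq_1_pos[THEN iffD2]) (use D in auto)
    then show ?thesis by (simp only: q_def)
  qed
  let ?O = "APRR d N p q"
  let ?G = "suminf (gF d N p q)"
  have cG: "ennreal c * ?G \<le> 1"
    by (rule gF_bound[OF d2 p]) (use c in auto)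
  have Gs: "?G \<le> ennreal Gb"
  proof -
    have "ennreal Gb * ennreal c = 1" using c by (simp add: Gb_def ennreal_mult[symmetric])
    then have "?G = ennreal Gb * (ennreal c * ?G)" by (simp add: mult.assoc[symmetric])
    also have "\<dots> \<le> ennreal Gb * 1" using cG by (intro mult_left_mono) auto
    finally show ?thesis by simp
  qed
  have X: "of_nat (d-1) * ennreal q * ?G \<le> ennreal (1/2)"
  proof -
    have "of_nat (d-1) * ennreal q * ?G \<le> of_nat (d-1) * ennreal q * ennreal Gb"
      using Gs by (intro mult_left_mono) auto
    also have "\<dots> = ennreal (real (d-1) * q * Gb)"
      using q0 Gb0 by (simp add: ennreal_mult ennreal_of_nat_eq_real_of_nat)
    also have "real (d-1) * q * Gb = Gb / (2 * (Gb + 1))"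
    proof -
      have r0: "r \<noteq> 0" "Gb + 1 \<noteq> 0" using dm Gb0 by auto
      have "real (d-1) * q * Gb = r * Gb / (2 * r * (Gb + 1))" by (simp add: q_def r_def)
      also have "\<dots> = (r * Gb) / (r * (2 * (Gb + 1)))" by (simp add: ac_simps)
      also have "\<dots> = Gb / (2 * (Gb + 1))" by (rule mult_divide_mult_cancel_left[OF r0(1)])
      finally show ?thesis .
    qed
    also have "\<dots> \<le> 1/2" using Gb0 by (simp add: field_simps)
    finally show ?thesis by (simp add: ennreal_leI)
  qed
  have E: "(\<integral>\<^sup>+w. (\<Sum>k. Cnt d w origin k) \<partial>?O) \<noteq> \<infinity>"
  proof -
    have "(\<integral>\<^sup>+w. (\<Sum>k. Cnt d w origin k) \<partial>?O) = (\<Sum>k. \<integral>\<^sup>+w. Cnt d w origin k \<partial>?O)"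
      by (rule nn_integral_suminf) simp
    also have "\<dots> \<le> (\<Sum>k. ennreal (Gb * (1/2)^k))"
    proof (intro suminf_le summableI)
      fix k
      have "(\<integral>\<^sup>+w. Cnt d w origin k \<partial>?O) \<le> ?G * (of_nat (d-1) * ennreal q * ?G)^k"
        using q0 q1 by (intro ECnt[OF d2] origin_vert) auto
      also have "\<dots> \<le> ennreal Gb * ennreal (1/2) ^ k"
        using Gs X by (intro mult_mono power_mono) auto
      also have "\<dots> = ennreal (Gb * (1/2)^k)"
      proof -
        have e1: "ennreal (1/2) ^ k = ennreal ((1/2)^k)" by (rule ennreal_power) simp
        have e2: "ennreal (Gb * (1/2)^k) = ennreal Gb * ennreal ((1/2)^k)" using Gb0 by (intro ennreal_mult) auto
        show ?thesis by (simp only: e1 e2)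
      qed
      finally show "(\<integral>\<^sup>+w. Cnt d w origin k \<partial>?O) \<le> ennreal (Gb * (1/2)^k)" .
    qed
    also have "\<dots> < \<infinity>"
    proof -
      have "summable (\<lambda>k. Gb * (1/2::real)^k)" by (intro summable_mult summable_geometric) simp
      then have "(\<Sum>k. ennreal (Gb * (1/2)^k)) \<noteq> \<top>" using Gb0 by (intro ennreal_suminf_neq_top) auto
      then show ?thesis by (simp add: top.not_eq_extremum)
    qed
    finally show ?thesis by simp
  qed
  have AE: "AE w in ?O. (\<Sum>k. Cnt d w origin k) \<noteq> \<infinity>"
    by (rule nn_integral_PInf_AE[OF _ E]) simp
  have sub: "(\<Sum>k. Cnt d w origin k) = \<infinity>" if w: "w \<in> perc_event d" for w
  proof -
    let ?R = "{y. (open_bond d w)\<^sup>*\<^sup>* origin y}"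
    have inf: "infinite ?R" using w by (simp add: perc_event_def)
    have "\<infinity> = emeasure (count_space UNIV) ?R"
      using inf by (simp add: emeasure_count_space_infinite)
    also have "\<dots> \<le> emeasure (count_space UNIV) (\<Union>k. Eset d w origin k)"
      using reach_Eset by (intro emeasure_mono) auto
    also have "\<dots> \<le> (\<Sum>k. emeasure (count_space UNIV) (Eset d w origin k))"
      by (rule emeasure_subadditive_countably) auto
    also have "\<dots> \<le> (\<Sum>k. Cnt d w origin k)"
      by (intro suminf_le summableI Eset_card)
    finally show ?thesis by (simp add: top_unique)
  qed
  have AE2: "AE w in ?O. w \<notin> perc_event d"
    using AE by eventually_elim (use sub in auto)
  have "emeasure ?O (perc_event d \<inter> space ?O) = 0"
    using AE2 by (subst (asm) AE_iff_measurable[OF perc_meas[OF d0]]) auto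
  then have "theta d N p q = 0" by (simp add: theta_def measure_def)
  then show ?thesis using q0 q1 perc_meas[OF d0] by blast
qed

end
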